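(* Let $\mathcal{X}$ be an input alphabet, $\mathcal{Z}$ an output alphabet, $q(\cdot\mid\cdot)$ an $\varepsilon$-LDP mechanism from $\mathcal{X}$ to $\mathcal{Z}$, $p$ any reference distribution on $\mathcal{Z}$, and $N\ge1$ any number of candidates. Then the MRC index distribution $\pi^{\mathrm{mrc}}$ is a $2\varepsilon$-LDP mechanism, i.e. for all $\mathbf{x},\mathbf{x}'\in\mathcal{X}$, all candidate tuples $(\mathbf{z}_1,\dots,\mathbf{z}_N)\in\mathcal{Z}^N$ and all $k\in[N]$, $\pi^{\mathrm{mrc}}_{\mathbf{x}}(k)\le e^{2\varepsilon}\pi^{\mathrm{mrc}}_{\mathbf{x}'}(k)$.
   Context: A mechanism $q$ maps $\mathbf{x}\in\mathcal{X}$ to a random $\mathbf{z}\in\mathcal{Z}$ with conditional density (or pmf) $q(\mathbf{z}\mid\mathbf{x})$; it is $\varepsilon$-LDP if $q(\mathbf{z}\mid\mathbf{x})\le e^{\varepsilon}q(\mathbf{z}\mid\mathbf{x}')$ for all $\mathbf{x},\mathbf{x}',\mathbf{z}$. When a mechanism also depends on shared randomness $\mathbf{u}$ (known to user and server, independent of $\mathbf{x}$), the $\varepsilon$-LDP requirement is that the inequality holds for every fixed value of $\mathbf{u}$. Minimal Random Coding (MRC): draw candidates $\mathbf{z}_1,\dots,\mathbf{z}_N$ i.i.d. from $p$ (the shared randomness), set $w(k)=q(\mathbf{z}_k\mid\mathbf{x})/p(\mathbf{z}_k)$ and $\pi^{\mathrm{mrc}}_{\mathbf{x}}(k)=w(k)/\sum_{k'=1}^N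 w(k')$ for $k\in[N]$; the mechanism outputs the index $K\sim\pi^{\mathrm{mrc}}_{\mathbf{x}}$. *)

theory Defs
  imports "HOL-Analysis.Analysis"
begin

(* A mechanism is given by its conditional density / pmf q x z = q(z | x) (nonnegative). *)
definition eps_LDP :: "real \<Rightarrow> ('x \<Rightarrow> 'z \<Rightarrow> real) \<Rightarrow> bool" where
  "eps_LDP \<epsilon> q \<longleftrightarrow> (\<forall>x x' z. q x z \<le> exp \<epsilon> * q x' z)"

definition mrc_weight :: "('x \<Rightarrow> 'z \<Rightarrow> real) \<Rightarrow> ('z \<Rightarrow> real) \<Rightarrow> (nat \<Rightarrow> 'z) \<Rightarrow> 'x \<Rightarrow> nat \<Rightarrow> real" where
  "mrc_weight q p zs x k = q x (zs k) / p (zs k)"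

definition pi_mrc :: "('x \<Rightarrow> 'z \<Rightarrow> real) \<Rightarrow> ('z \<Rightarrow> real) \<Rightarrow> nat \<Rightarrow> (nat \<Rightarrow> 'z) \<Rightarrow> 'x \<Rightarrow> nat \<Rightarrow> real" where
  "pi_mrc q p N zs x k = mrc_weight q p zs x k / (\<Sum>k'\<in>{1..N}. mrc_weight q p zs x k')"

end

theory Submission
  imports Defs
begin

theorem theorem2:
  fixes q :: "'x \<Rightarrow> 'z \<Rightarrow> real" and p :: "'z \<Rightarrow> real"
    and \<epsilon> :: real and N :: nat and zs :: "nat \<Rightarrow> 'z"
  assumes q_nonneg: "\<forall>x z. q x z \<ge> 0"
    and ldp: "eps_LDP \<epsilon> q"
    and p_nonneg: "\<forall>z. p z \<ge> 0"
    and N: "N \<ge> 1"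
    and cand: "\<forall>k\<in>{1..N}. p (zs k) > 0"
  shows "\<forall>x x'. \<forall>k\<in>{1..N}. pi_mrc q p N zs x k \<le> exp (2 * \<epsilon>) * pi_mrc q p N zs x' k"
proof (intro allI ballI)
  fix x x' k assume k: "k \<in> {1..N}"
  define w where "w = mrc_weight q p zs"
  have wnn: "\<And>y j. w y j \<ge> 0"
    unfolding w_def mrc_weight_def using q_nonneg p_nonneg by simp
  have wle: "\<And>y y' j. j \<in> {1..N} \<Longrightarrow> w y j \<le> exp \<epsilon> * w y' j"
  proof -
    fix y y' j assume j: "j \<in> {1..N}"
    have "q y (zs j) \<le> exp \<epsilon> * q y' (zs j)" using ldp unfolding eps_LDP_def by blast
    then show "w y j \<le> exp \<epsilon> * w y' j"
      unfolding w_def mrc_weight_def using cand j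
      by (metis divide_right_mono less_eq_real_def times_divide_eq_right)
  qed
  define a where "a = w x k"
  define a' where "a' = w x' k"
  define S where "S = (\<Sum>j\<in>{1..N}. w x j)"
  define S' where "S' = (\<Sum>j\<in>{1..N}. w x' j)"
  have a: "a \<le> exp \<epsilon> * a'" unfolding a_def a'_def using wle k by blast
  have "S' \<le> (\<Sum>j\<in>{1..N}. exp \<epsilon> * w x j)" unfolding S'_def
    by (rule sum_mono) (rule wle)
  then have SS: "S' \<le> exp \<epsilon> * S" unfolding S_def by (simp add: sum_distrib_left)
  have a'S': "a' \<le> S'" unfolding a'_def S'_def
    using member_le_sum[of k "{1..N}" "w x'"] k wnn by auto
  have an: "a \<ge> 0" "a' \<ge> 0" unfolding a_def a'_def using wnn by auto
  have Sn: "S \<ge> 0" unfolding S_def using wnn by (simp add: sum_nonneg)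
  have e2: "exp (2 * \<epsilon>) = exp \<epsilon> * exp \<epsilon>" by (simp flip: exp_add)
  have goal: "a / S \<le> exp (2 * \<epsilon>) * (a' / S')"
  proof (cases "S = 0")
    case True
    have "S' \<ge> 0" using a'S' an by linarith
    then show ?thesis using True an by simp
  next
    case False
    hence Sp: "S > 0" using Sn by simp
    show ?thesis
    proof (cases "S' = 0")
      case True
      then have "a' = 0" using a'S' an by simp
      then have "a = 0" using a an by simp
      then show ?thesis using True by simp
    next
      case False
      hence S'p: "S' > 0" using a'S' an by linarith
      have "a / S \<le> exp \<epsilon> * a' / S" using a Sp by (simp add: divide_right_mono)
      also have "\<dots> \<le> exp \<epsilon> * a' * exp \<epsilon> / S'"
      proof -
        have "S' * (a' * exp \<epsilon>) \<le> (S * exp \<epsilon>) * (a' * exp \<epsilon>)"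
          using SS an by (intro mult_right_mono) (auto simp: mult.commute)
        then show ?thesis using Sp S'p by (simp add: field_simps)
      qed
      finally show ?thesis using e2 by (simp add: field_simps)
    qed
  qed
  then show "pi_mrc q p N zs x k \<le> exp (2 * \<epsilon>) * pi_mrc q p N zs x' k"
    unfolding pi_mrc_def a_def a'_def S_def S'_def w_def by simp
qed

end
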